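(* Let $0<n<\omega$, $k\ge2$, let $(C;\leq_0,\ldots,\leq_{n-1})$ be an $n$-preorder, $A:C\to\bar k$, and $F\in\mathcal{F}_k(n)$. Then $A\in\mathcal{C}(F)$ if and only if $T\leq_hF$ for every $T\in\mathcal{T}_k(n)$ with $T\leq_h (C;\leq_0,\ldots,\leq_{n-1},A)$.
   Context: $\bar k=\{0,\dots,k-1\}$. An $n$-preorder is a set $C$ with preorders $\le_0,\dots,\le_{n-1}$ such that $x\le_{i+1}y$ implies $x\equiv_i y$ (where $\equiv_i$ is the equivalence induced by $\le_i$). Its associated $n$-base is $\mathcal C=(\mathcal C_0,\dots,\mathcal C_{n-1})$, $\mathcal C_i$ = the family of $\le_i$-up subsets of $C$. Restricting to an $\equiv_0$-class $[c]_0$ gives the $(n-1)$-preorder $([c]_0;\le_1,\dots,\le_{n-1})$. Forests/trees: a forest is represented as a finite $F\subseteq\omega^+$ closed under nonempty prefixes, ordered by prefix; a tree as a finite prefix-closed $V\subseteq\omega^*$. For a preorder $Q$, $Q$-forests/trees carry labelings into $Q$, and $(P,c)\le_h(P',c')$ iff there is a monotone $\varphi:P\to P'$ with $c(x)\le c'(\varphi(x))$. $\mathcal T_k(0)=\bar k$ (antichain), $\mathcal T_k(m+1)$ = $\mathcal T_k(m)$-trees with $\le_h$; $\mathcal F_k(n)$ is the set of $\mathcal T_k(n-1)$-forests with $\le_h$. $T\le_h(C;\le_0,\dots,\le_{n-1},A)$ for $(T,t)\in\mathcal T_k(n)$ is defined recursively: for $n=1$, there is a monotone $\varphi:T\to(C;\le_0)$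 with $t(\tau)=A(\varphi(\tau))$ for all $\tau$; for $n>1$, there is a monotone $\varphi:T\to(C;\le_0)$ with $t(\tau)\le_h([\varphi(\tau)]_0;\le_1,\dots,\le_{n-1},A|_{[\varphi(\tau)]_0})$ for all $\tau\in T$. Fine hierarchy: for an $n$-base $\mathcal L=(\mathcal L_0,\dots,\mathcal L_{n-1})$ in a set $S$ (families closed under finite $\cup,\cap$, containing $\emptyset,S$) and $(F,c)\in\mathcal F_k(n)$, an $F$-family over $\mathcal L$ is $\{U_\tau\}_{\tau\in F}$ with $U_\tau\in\mathcal L_0$, $U_{\tau i}\subseteq U_\tau$, $\bigcup U_\tau=S$, together with (if $n>1$) for each $\tau$ a $c(\tau)$-family over the $(n-1)$-base $(\{\tilde U_\tau\cap B:B\in\mathcal L_1\},\dots,\{\tilde U_\tau\cap B:B\in\mathcal L_{n-1}\})$ in $\tilde U_\tau$, where $\tilde U_\tau=U_\tau\setminus\bigcup_{\tau i\in F}U_{\tau i}$ (for trees the same definition with $V\subseteq\omega^*$). It determines $A:S\to\bar k$ if: for $n=1$, $A(x)=c(\tau)$ whenever $x\in\tilde U_\tau$; for $n>1$, for every $\tau$, $A|_{\tilde U_\tau}$ is determined by the $c(\tau)$-family attached to $\tau$. $\mathcal C(F)$ is the set of $A:C\to\bar k$ determined by some $F$-family over the $n$-base $\mathcal C$. *)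

theory Defs
  imports Main "HOL-Library.Sublist"
begin

text \<open>Iterated labelled trees: elements of T_k(0) are Base i (i < k);
  elements of T_k(m+1) are Tr V t with V a finite nonempty prefix-closed set
  of words over nat and t labelling V by elements of T_k(m).
  Labels outside V are irrelevant.\<close>
datatype lt = Base nat | Tr "nat list set" "nat list \<Rightarrow> lt"

definition is_tree :: "nat list set \<Rightarrow> bool" where
  "is_tree V \<longleftrightarrow> finite V \<and> V \<noteq> {} \<and> (\<forall>\<tau> \<sigma>. \<tau> @ \<sigma> \<in> V \<longrightarrow> \<tau> \<in> V)"

definition is_forest :: "nat list set \<Rightarrow> bool" where
  "is_forest F \<longleftrightarrow> finite F \<and> [] \<notin> F \<and>
     (\<forall>\<tau> \<sigma>. \<tau> @ \<sigma> \<in> F \<longrightarrow> \<tau> \<noteq> [] \<longrightarrow> \<tau> \<in> F)"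

fun isT :: "nat \<Rightarrow> nat \<Rightarrow> lt \<Rightarrow> bool" where
  "isT k 0 t = (\<exists>i<k. t = Base i)"
| "isT k (Suc m) t = (case t of Base _ \<Rightarrow> False
      | Tr V f \<Rightarrow> is_tree V \<and> (\<forall>\<tau>\<in>V. isT k m (f \<tau>)))"

definition isF :: "nat \<Rightarrow> nat \<Rightarrow> nat list set \<Rightarrow> (nat list \<Rightarrow> lt) \<Rightarrow> bool" where
  "isF k n F c \<longleftrightarrow> is_forest F \<and> (\<forall>\<tau>\<in>F. isT k (n - 1) (c \<tau>))"

definition mono_map :: "nat list set \<Rightarrow> (nat list \<Rightarrow> 'b) \<Rightarrow> ('b \<Rightarrow> 'b \<Rightarrow> bool) \<Rightarrow> bool" where
  "mono_map V \<phi> r \<longleftrightarrow> (\<forall>\<sigma>\<in>V. \<forall>\<tau>\<in>V. prefix \<sigma> \<tau> \<longrightarrow> r (\<phi> \<sigma>) (\<phi> \<tau>))"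

fun hleT :: "nat \<Rightarrow> lt \<Rightarrow> lt \<Rightarrow> bool" where
  "hleT 0 s t = (case (s, t) of (Base i, Base j) \<Rightarrow> i = j | _ \<Rightarrow> False)"
| "hleT (Suc m) s t = (case (s, t) of
      (Tr V f, Tr V' f') \<Rightarrow> (\<exists>\<phi>. (\<forall>x\<in>V. \<phi> x \<in> V') \<and> mono_map V \<phi> prefix \<and>
                                    (\<forall>x\<in>V. hleT m (f x) (f' (\<phi> x))))
    | _ \<Rightarrow> False)"

definition hleTF :: "nat \<Rightarrow> lt \<Rightarrow> nat list set \<Rightarrow> (nat list \<Rightarrow> lt) \<Rightarrow> bool" where
  "hleTF m T F c = (case T of Base _ \<Rightarrow> False
     | Tr V f \<Rightarrow> (\<exists>\<phi>. (\<forall>x\<in>V. \<phi> x \<in> F) \<and> mono_map V \<phi> prefix \<and>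
                       (\<forall>x\<in>V. hleT m (f x) (c (\<phi> x)))))"

definition npreorder :: "nat \<Rightarrow> 'a set \<Rightarrow> (nat \<Rightarrow> 'a \<Rightarrow> 'a \<Rightarrow> bool) \<Rightarrow> bool" where
  "npreorder n C le \<longleftrightarrow>
     (\<forall>i<n. (\<forall>x\<in>C. le i x x) \<and> (\<forall>x\<in>C. \<forall>y\<in>C. \<forall>z\<in>C. le i x y \<longrightarrow> le i y z \<longrightarrow> le i x z)) \<and>
     (\<forall>i. Suc i < n \<longrightarrow> (\<forall>x\<in>C. \<forall>y\<in>C. le (Suc i) x y \<longrightarrow> le i x y \<and> le i y x))"

definition eqcl :: "'a set \<Rightarrow> ('a \<Rightarrow> 'a \<Rightarrow> bool) \<Rightarrow> 'a \<Rightarrow> 'a set" where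
  "eqcl C r x = {y\<in>C. r x y \<and> r y x}"

fun tleC :: "nat \<Rightarrow> lt \<Rightarrow> 'a set \<Rightarrow> (nat \<Rightarrow> 'a \<Rightarrow> 'a \<Rightarrow> bool) \<Rightarrow> ('a \<Rightarrow> nat) \<Rightarrow> bool" where
  "tleC 0 T C le A = False"
| "tleC (Suc m) T C le A = (case T of Base _ \<Rightarrow> False
     | Tr V t \<Rightarrow> (\<exists>\<phi>. (\<forall>\<tau>\<in>V. \<phi> \<tau> \<in> C) \<and> mono_map V \<phi> (le 0) \<and>
          (\<forall>\<tau>\<in>V. if m = 0 then t \<tau> = Base (A (\<phi> \<tau>))
                   else tleC m (t \<tau>) (eqcl C (le 0) (\<phi> \<tau>)) (\<lambda>i. le (Suc i)) A)))"

definition Cbase :: "'a set \<Rightarrow> (nat \<Rightarrow> 'a \<Rightarrow> 'a \<Rightarrow> bool) \<Rightarrow> nat \<Rightarrow> 'a set set" where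
  "Cbase C le i = {U. U \<subseteq> C \<and> (\<forall>x\<in>U. \<forall>y\<in>C. le i x y \<longrightarrow> y \<in> U)}"

definition is_family :: "'a set \<Rightarrow> (nat \<Rightarrow> 'a set set) \<Rightarrow> nat list set \<Rightarrow> (nat list \<Rightarrow> 'a set) \<Rightarrow> bool" where
  "is_family S L P U \<longleftrightarrow> (\<forall>\<tau>\<in>P. U \<tau> \<in> L 0) \<and>
     (\<forall>\<tau> i. \<tau> \<in> P \<longrightarrow> \<tau> @ [i] \<in> P \<longrightarrow> U (\<tau> @ [i]) \<subseteq> U \<tau>) \<and>
     (\<Union>\<tau>\<in>P. U \<tau>) = S"

definition tildeU :: "nat list set \<Rightarrow> (nat list \<Rightarrow> 'a set) \<Rightarrow> nat list \<Rightarrow> 'a set" where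
  "tildeU P U \<tau> = U \<tau> - (\<Union>i\<in>{i. \<tau> @ [i] \<in> P}. U (\<tau> @ [i]))"

fun trnodes :: "lt \<Rightarrow> nat list set" where
  "trnodes (Tr V t) = V" | "trnodes (Base _) = {}"
fun trlabs :: "lt \<Rightarrow> nat list \<Rightarrow> lt" where
  "trlabs (Tr V t) = t" | "trlabs (Base i) = (\<lambda>_. Base i)"

fun determines :: "nat \<Rightarrow> 'a set \<Rightarrow> (nat \<Rightarrow> 'a set set) \<Rightarrow> nat list set \<Rightarrow> (nat list \<Rightarrow> lt)
     \<Rightarrow> ('a \<Rightarrow> nat) \<Rightarrow> bool" where
  "determines 0 S L P c A = False"
| "determines (Suc m) S L P c A = (\<exists>U. is_family S L P U \<and>
     (\<forall>\<tau>\<in>P. if m = 0 then (\<forall>x\<in>tildeU P U \<tau>. c \<tau> = Base (A x))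
             else determines m (tildeU P U \<tau>)
                    (\<lambda>j. (\<lambda>B. tildeU P U \<tau> \<inter> B) ` L (Suc j))
                    (trnodes (c \<tau>)) (trlabs (c \<tau>)) A))"

definition fine_class :: "nat \<Rightarrow> nat \<Rightarrow> 'a set \<Rightarrow> (nat \<Rightarrow> 'a \<Rightarrow> 'a \<Rightarrow> bool)
     \<Rightarrow> nat list set \<Rightarrow> (nat list \<Rightarrow> lt) \<Rightarrow> ('a \<Rightarrow> nat) set" where
  "fine_class n k C le F c = {A. (\<forall>x\<in>C. A x < k) \<and> determines n C (Cbase C le) F c A}"

end

theory Submission
  imports Defs
begin


definition up :: "'a set \<Rightarrow> (nat \<Rightarrow> 'a \<Rightarrow> 'a \<Rightarrow> bool) \<Rightarrow> 'a \<Rightarrow> 'a set" where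
  "up S le x = {y\<in>S. le 0 x y}"
definition sub :: "nat list set \<Rightarrow> nat list \<Rightarrow> nat list set" where
  "sub Q q = {q'\<in>Q. prefix q q'}"

lemma tleC_mono_set: "tleC m T D le A \<Longrightarrow> D \<subseteq> D' \<Longrightarrow> tleC m T D' le A"
proof (induction m arbitrary: T D D' le)
  case 0 then show ?case by simp
next
  case (Suc m)
  show ?case
  proof (cases T)
    case (Base x) with Suc.prems show ?thesis by simp
  next
    case (Tr V t)
    from Suc.prems(1) Tr obtain \<phi> where p1: "\<forall>\<tau>\<in>V. \<phi> \<tau> \<in> D" and p2: "mono_map V \<phi> (le 0)"
      and p3: "\<forall>\<tau>\<in>V. if m = 0 then t \<tau> = Base (A (\<phi> \<tau>))
                   else tleC m (t \<tau>) (eqcl D (le 0) (\<phi> \<tau>)) (\<lambda>i. le (Suc i)) A" by auto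
    have e: "eqcl D (le 0) y \<subseteq> eqcl D' (le 0) y" for y using Suc.prems(2) by (auto simp: eqcl_def)
    have "\<forall>\<tau>\<in>V. if m = 0 then t \<tau> = Base (A (\<phi> \<tau>))
                   else tleC m (t \<tau>) (eqcl D' (le 0) (\<phi> \<tau>)) (\<lambda>i. le (Suc i)) A"
      using p3 Suc.IH e by metis
    with p1 p2 Suc.prems(2) Tr show ?thesis by (auto intro!: exI[of _ \<phi>])
  qed
qed

lemma hleTF_mono: "hleTF m T Q c \<Longrightarrow> Q \<subseteq> Q' \<Longrightarrow> hleTF m T Q' c"
  by (auto simp: hleTF_def split: lt.splits)

lemma hleTF_root: "hleTF m (Tr V t) Q c \<Longrightarrow> [] \<in> V \<Longrightarrow> \<exists>q\<in>Q. hleTF m (Tr V t) (sub Q q) c"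
proof -
  assume h: "hleTF m (Tr V t) Q c" and r: "[] \<in> V"
  then obtain \<psi> where a: "\<forall>x\<in>V. \<psi> x \<in> Q" and b: "mono_map V \<psi> prefix"
    and d: "\<forall>x\<in>V. hleT m (t x) (c (\<psi> x))" by (auto simp: hleTF_def)
  have "\<forall>x\<in>V. \<psi> x \<in> sub Q (\<psi> [])" using a b r by (auto simp: sub_def mono_map_def)
  then show ?thesis using a b d r by (auto simp: hleTF_def intro!: bexI[of _ "\<psi> []"])
qed

definition joinV :: "nat list set \<Rightarrow> nat list set \<Rightarrow> nat list set" where
  "joinV V1 V2 = insert [] ((#) 0 ` V1 \<union> (#) 1 ` V2)"

definition jn :: "lt \<Rightarrow> lt \<Rightarrow> lt \<Rightarrow> lt" where
  "jn r T1 T2 = Tr (joinV (trnodes T1) (trnodes T2))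
     (\<lambda>\<sigma>. case \<sigma> of [] \<Rightarrow> r | a # \<sigma>' \<Rightarrow> if a = 0 then trlabs T1 \<sigma>' else trlabs T2 \<sigma>')"

lemma jn_Tr: "jn r (Tr V1 t1) (Tr V2 t2) = Tr (joinV V1 V2)
     (\<lambda>\<sigma>. case \<sigma> of [] \<Rightarrow> r | a # \<sigma>' \<Rightarrow> if a = 0 then t1 \<sigma>' else t2 \<sigma>')"
  by (auto simp: jn_def fun_eq_iff split: list.split)

lemma joinV_tree: "is_tree V1 \<Longrightarrow> is_tree V2 \<Longrightarrow> is_tree (joinV V1 V2)"
  unfolding is_tree_def joinV_def
proof (intro conjI allI impI)
  fix \<tau> \<sigma> assume h: "finite V1 \<and> V1 \<noteq> {} \<and> (\<forall>\<tau> \<sigma>. \<tau> @ \<sigma> \<in> V1 \<longrightarrow> \<tau> \<in> V1)"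
    "finite V2 \<and> V2 \<noteq> {} \<and> (\<forall>\<tau> \<sigma>. \<tau> @ \<sigma> \<in> V2 \<longrightarrow> \<tau> \<in> V2)"
    "\<tau> @ \<sigma> \<in> insert [] ((#) 0 ` V1 \<union> (#) 1 ` V2)"
  show "\<tau> \<in> insert [] ((#) 0 ` V1 \<union> (#) 1 ` V2)"
  proof (cases \<tau>)
    case Nil then show ?thesis by simp
  next
    case (Cons a l) then show ?thesis using h by auto
  qed
qed auto

lemma isT_jn: "isT k (Suc m) T1 \<Longrightarrow> isT k (Suc m) T2 \<Longrightarrow> isT k m r \<Longrightarrow> isT k (Suc m) (jn r T1 T2)"
  apply (cases T1; cases T2; simp)
  apply (simp add: jn_Tr joinV_tree)
  apply (auto simp: joinV_def)
  done

lemma tleC_jn: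
  assumes "x \<in> D" "\<forall>y\<in>D. le 0 x y" "tleC (Suc m) T1 D le A" "tleC (Suc m) T2 D le A"
    and "if m = 0 then r = Base (A x) else tleC m r (eqcl D (le 0) x) (\<lambda>i. le (Suc i)) A"
  shows "tleC (Suc m) (jn r T1 T2) D le A"
proof -
  obtain V1 t1 where T1: "T1 = Tr V1 t1" using assms(3) by (cases T1) auto
  obtain V2 t2 where T2: "T2 = Tr V2 t2" using assms(4) by (cases T2) auto
  from assms(3) T1 obtain \<phi>1 where a1: "\<forall>\<tau>\<in>V1. \<phi>1 \<tau> \<in> D" and b1: "mono_map V1 \<phi>1 (le 0)"
      and c1: "\<forall>\<tau>\<in>V1. if m = 0 then t1 \<tau> = Base (A (\<phi>1 \<tau>))
                   else tleC m (t1 \<tau>) (eqcl D (le 0) (\<phi>1 \<tau>)) (\<lambda>i. le (Suc i)) A" by auto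
  from assms(4) T2 obtain \<phi>2 where a2: "\<forall>\<tau>\<in>V2. \<phi>2 \<tau> \<in> D" and b2: "mono_map V2 \<phi>2 (le 0)"
      and c2: "\<forall>\<tau>\<in>V2. if m = 0 then t2 \<tau> = Base (A (\<phi>2 \<tau>))
                   else tleC m (t2 \<tau>) (eqcl D (le 0) (\<phi>2 \<tau>)) (\<lambda>i. le (Suc i)) A" by auto
  define \<phi> where "\<phi> = (\<lambda>\<sigma>::nat list. case \<sigma> of [] \<Rightarrow> x | a # \<sigma>' \<Rightarrow> if a = 0 then \<phi>1 \<sigma>' else \<phi>2 \<sigma>')"
  have im: "\<forall>\<tau>\<in>joinV V1 V2. \<phi> \<tau> \<in> D" using a1 a2 assms(1) by (auto simp: joinV_def \<phi>_def)
  have mo: "mono_map (joinV V1 V2) \<phi> (le 0)"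
    unfolding mono_map_def
  proof (intro ballI impI)
    fix \<sigma> \<tau> assume s: "\<sigma> \<in> joinV V1 V2" and t: "\<tau> \<in> joinV V1 V2" and p: "prefix \<sigma> \<tau>"
    show "le 0 (\<phi> \<sigma>) (\<phi> \<tau>)"
    proof (cases \<sigma>)
      case Nil then show ?thesis using im t assms(2) by (simp add: \<phi>_def)
    next
      case (Cons a l)
      then obtain l' where tl: "\<tau> = a # l'" "prefix l l'" using p by (cases \<tau>) auto
      show ?thesis using s t Cons tl b1 b2 by (auto simp: joinV_def \<phi>_def mono_map_def)
    qed
  qed
  have lab: "\<forall>\<tau>\<in>joinV V1 V2. if m = 0 then (case \<tau> of [] \<Rightarrow> r | a # \<sigma>' \<Rightarrow> if a = 0 then t1 \<sigma>' else t2 \<sigma>') = Base (A (\<phi> \<tau>))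
        else tleC m (case \<tau> of [] \<Rightarrow> r | a # \<sigma>' \<Rightarrow> if a = 0 then t1 \<sigma>' else t2 \<sigma>') (eqcl D (le 0) (\<phi> \<tau>)) (\<lambda>i. le (Suc i)) A"
  proof
    fix \<tau> assume t: "\<tau> \<in> joinV V1 V2"
    then consider "\<tau> = []" | \<sigma> where "\<tau> = 0 # \<sigma>" "\<sigma> \<in> V1" | \<sigma> where "\<tau> = 1 # \<sigma>" "\<sigma> \<in> V2"
      by (auto simp: joinV_def)
    then show "if m = 0 then (case \<tau> of [] \<Rightarrow> r | a # \<sigma>' \<Rightarrow> if a = 0 then t1 \<sigma>' else t2 \<sigma>') = Base (A (\<phi> \<tau>))
        else tleC m (case \<tau> of [] \<Rightarrow> r | a # \<sigma>' \<Rightarrow> if a = 0 then t1 \<sigma>' else t2 \<sigma>') (eqcl D (le 0) (\<phi> \<tau>)) (\<lambda>i. le (Suc i)) A"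
    proof cases
      case 1 then show ?thesis using assms(5) by (simp add: \<phi>_def)
    next
      case (2 \<sigma>) then show ?thesis using c1 by (simp add: \<phi>_def)
    next
      case (3 \<sigma>) then show ?thesis using c2 by (simp add: \<phi>_def)
    qed
  qed
  show ?thesis using im mo lab T1 T2 by (auto simp: jn_Tr intro!: exI[of _ \<phi>])
qed

lemma hleTF_jn:
  assumes "hleTF m (jn r (Tr V1 t1) (Tr V2 t2)) Q c"
  shows "\<exists>q\<in>Q. hleT m r (c q) \<and> hleTF m (Tr V1 t1) (sub Q q) c \<and> hleTF m (Tr V2 t2) (sub Q q) c"
proof -
  obtain \<psi> where a: "\<forall>x\<in>joinV V1 V2. \<psi> x \<in> Q" and b: "mono_map (joinV V1 V2) \<psi> prefix"
    and d: "\<forall>x\<in>joinV V1 V2. hleT m ((\<lambda>\<sigma>. case \<sigma> of [] \<Rightarrow> r | a # \<sigma>' \<Rightarrow> if a = 0 then t1 \<sigma>' else t2 \<sigma>') x) (c (\<psi> x))"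
    using assms by (auto simp: hleTF_def jn_Tr)
  have r0: "[] \<in> joinV V1 V2" by (simp add: joinV_def)
  have d1: "\<forall>\<sigma>\<in>V1. hleT m (t1 \<sigma>) (c (\<psi> (0 # \<sigma>)))"
  proof
    fix \<sigma> assume "\<sigma> \<in> V1"
    then have "0 # \<sigma> \<in> joinV V1 V2" by (simp add: joinV_def)
    from d[rule_format, OF this] show "hleT m (t1 \<sigma>) (c (\<psi> (0 # \<sigma>)))" by simp
  qed
  have d2: "\<forall>\<sigma>\<in>V2. hleT m (t2 \<sigma>) (c (\<psi> (1 # \<sigma>)))"
  proof
    fix \<sigma> assume "\<sigma> \<in> V2"
    then have "1 # \<sigma> \<in> joinV V1 V2" by (simp add: joinV_def)
    from d[rule_format, OF this] show "hleT m (t2 \<sigma>) (c (\<psi> (1 # \<sigma>)))" by simp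
  qed
  have 1: "hleTF m (Tr V1 t1) (sub Q (\<psi> [])) c"
    unfolding hleTF_def
    apply (simp, rule exI[of _ "\<lambda>\<sigma>. \<psi> (0 # \<sigma>)"])
    using a b d1 r0 by (auto simp: joinV_def sub_def mono_map_def)
  have 2: "hleTF m (Tr V2 t2) (sub Q (\<psi> [])) c"
    unfolding hleTF_def
    apply (simp, rule exI[of _ "\<lambda>\<sigma>. \<psi> (1 # \<sigma>)"])
    using a b d2 r0 by (auto simp: joinV_def sub_def mono_map_def)
  have 3: "hleT m r (c (\<psi> []))" using d r0 by fastforce
  show ?thesis using 1 2 3 a r0 by blast
qed



fun sing :: "nat \<Rightarrow> nat \<Rightarrow> lt" where
  "sing 0 a = Base a" | "sing (Suc j) a = Tr {[]} (\<lambda>_. sing j a)"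

lemma isT_sing: "a < k \<Longrightarrow> isT k j (sing j a)"
proof (induction j)
  case 0 then show ?case by simp
next
  case (Suc j)
  have "is_tree {[]}" by (simp add: is_tree_def)
  then show ?case using Suc by simp
qed

lemma tleC_sing0: "x \<in> D \<Longrightarrow> le 0 x x \<Longrightarrow> tleC (Suc 0) (sing (Suc 0) (A x)) D le A"
proof -
  assume a: "x \<in> D" "le 0 x x"
  have "mono_map {[]} (\<lambda>_. x) (le 0)" using a by (simp add: mono_map_def)
  then show ?thesis using a by (auto intro!: exI[of _ "\<lambda>_. x"])
qed
lemma tleC_sing: "x \<in> D \<Longrightarrow> (\<And>i. i \<le> j \<Longrightarrow> le i x x) \<Longrightarrow> tleC (Suc j) (sing (Suc j) (A x)) D le A"
proof (induction j arbitrary: D le)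
  case 0 then show ?case using tleC_sing0[of x D le] by simp
next
  case (Suc j)
  have e: "x \<in> eqcl D (le 0) x" using Suc.prems(1) Suc.prems(2)[of 0] by (simp add: eqcl_def)
  have r: "\<And>i. i \<le> j \<Longrightarrow> le (Suc i) x x" using Suc.prems(2) by simp
  have *: "tleC (Suc j) (sing (Suc j) (A x)) (eqcl D (le 0) x) (\<lambda>i. le (Suc i)) A"
    using Suc.IH[OF e, of "\<lambda>i. le (Suc i)"] r by blast
  have m: "mono_map {[]} (\<lambda>_. x) (le 0)" using Suc.prems(2)[of 0] by (simp add: mono_map_def)
  have "tleC (Suc (Suc j)) (Tr {[]} (\<lambda>_. sing (Suc j) (A x))) D le A"
    apply (simp only: tleC.simps lt.case)
    apply (rule exI[of _ "\<lambda>_. x"])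
    using Suc.prems(1) m * by simp
  then show ?case by simp
qed

lemma directed:
  assumes "finite I" "G \<noteq> {}" "\<forall>T\<in>G. \<exists>i\<in>I. R T i"
    "\<forall>T1\<in>G. \<forall>T2\<in>G. \<exists>T3\<in>G. \<forall>i. R T3 i \<longrightarrow> R T1 i \<and> R T2 i"
  shows "\<exists>i\<in>I. \<forall>T\<in>G. R T i"
proof -
  define f where "f T = {i\<in>I. R T i}" for T
  obtain T00 where T00: "T00 \<in> G" using assms(2) by auto
  obtain T0 where T0: "T0 \<in> G" and mn: "\<And>T. T \<in> G \<Longrightarrow> card (f T0) \<le> card (f T)"
  proof -
    from ex_has_least_nat[of "\<lambda>T. T \<in> G" T00 "\<lambda>T. card (f T)", OF T00]
    obtain T0 where "T0 \<in> G" "\<forall>T. T \<in> G \<longrightarrow> card (f T0) \<le> card (f T)" by auto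
    then show ?thesis using that by auto
  qed
  obtain i where i: "i \<in> I" "R T0 i" using assms(3) T0 by auto
  have "R T i" if T: "T \<in> G" for T
  proof -
    obtain T3 where T3: "T3 \<in> G" "\<forall>i. R T3 i \<longrightarrow> R T0 i \<and> R T i"
      using assms(4)[rule_format, OF T0 T] by (elim bexE) simp
    have s: "f T3 \<subseteq> f T0" using T3(2) unfolding f_def by blast
    have fin: "finite (f T0)" using assms(1) by (simp add: f_def)
    have "card (f T0) \<le> card (f T3)" using mn T3(1) by simp
    then have "f T3 = f T0" by (intro card_subset_eq[OF fin s] le_antisym card_mono[OF fin s])
    then have "R T3 i" using i by (auto simp: f_def)
    then show "R T i" using T3(2) by blast
  qed
  then show ?thesis using i by auto
qed

lemma ex_maxlen:
  fixes M :: "'b list set"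
  assumes "finite M" "M \<noteq> {}"
  shows "\<exists>q\<in>M. \<forall>q'\<in>M. length q' \<le> length q"
proof -
  have f: "finite (length ` M)" "length ` M \<noteq> {}" using assms by auto
  obtain q where q: "q \<in> M" "length q = Max (length ` M)" using Max_in[OF f] by auto
  have "\<forall>q'\<in>M. length q' \<le> Max (length ` M)" using Max_ge[OF f(1)] by blast
  then have "\<forall>q'\<in>M. length q' \<le> length q" using q(2) by simp
  then show ?thesis using q(1) by (intro bexI[of _ q])
qed

lemma descend:
  assumes "finite P" "p \<in> P" "x \<in> U p"
  shows "\<exists>p'\<in>P. prefix p p' \<and> x \<in> tildeU P U p'"
proof -
  define M where "M = {q\<in>P. prefix p q \<and> x \<in> U q}"
  have fM: "finite M" using assms(1) by (simp add: M_def)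
  have nM: "M \<noteq> {}" using assms by (auto simp: M_def)
  obtain q where q: "q \<in> M" "\<forall>q'\<in>M. length q' \<le> length q"
    using ex_maxlen[OF fM nM] by blast
  have "x \<in> tildeU P U q"
  proof -
    have "x \<notin> U (q @ [i])" if "q @ [i] \<in> P" for i
    proof
      assume "x \<in> U (q @ [i])"
      then have "q @ [i] \<in> M" using q(1) that by (auto simp: M_def)
      then show False using q(2) by fastforce
    qed
    then show ?thesis using q(1) by (auto simp: tildeU_def M_def)
  qed
  then show ?thesis using q(1) by (auto simp: M_def)
qed

lemma build_mono:
  fixes Q :: "nat list \<Rightarrow> nat list \<Rightarrow> bool"
  assumes "finite V" "\<forall>\<tau> \<sigma>. \<tau> @ \<sigma> \<in> V \<longrightarrow> \<tau> \<in> V"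
    "\<forall>\<sigma>\<in>V. \<exists>p. Q \<sigma> p"
    "\<forall>\<sigma>\<in>V. \<forall>\<sigma>'\<in>V. \<forall>p. prefix \<sigma> \<sigma>' \<longrightarrow> Q \<sigma> p \<longrightarrow> (\<exists>p'. prefix p p' \<and> Q \<sigma>' p')"
  shows "\<exists>\<psi>. (\<forall>\<sigma>\<in>V. Q \<sigma> (\<psi> \<sigma>)) \<and> mono_map V \<psi> prefix"
  using assms
proof (induction "card V" arbitrary: V rule: less_induct)
  case less
  show ?case
  proof (cases "V = {}")
    case True then show ?thesis by (auto simp: mono_map_def)
  next
    case False
    obtain \<sigma> where s: "\<sigma> \<in> V" "\<forall>\<tau>\<in>V. length \<tau> \<le> length \<sigma>"
      using ex_maxlen[OF less.prems(1) False] by blast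
    define V' where "V' = V - {\<sigma>}"
    have cV: "card V' < card V" unfolding V'_def by (rule card_Diff1_less[OF less.prems(1) s(1)])
    have pc: "\<forall>\<tau> \<rho>. \<tau> @ \<rho> \<in> V' \<longrightarrow> \<tau> \<in> V'"
    proof (intro allI impI)
      fix \<tau> \<rho> assume h: "\<tau> @ \<rho> \<in> V'"
      then have "\<tau> \<in> V" using less.prems(2) by (auto simp: V'_def)
      moreover have "\<tau> \<noteq> \<sigma>"
      proof
        assume "\<tau> = \<sigma>"
        then have "\<rho> \<noteq> []" using h by (auto simp: V'_def)
        moreover have "length (\<tau> @ \<rho>) \<le> length \<sigma>" using s(2) h by (auto simp: V'_def)
        ultimately show False using \<open>\<tau> = \<sigma>\<close> by simp
      qed
      ultimately show "\<tau> \<in> V'" by (simp add: V'_def)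
    qed
    have fV': "finite V'" using less.prems(1) by (simp add: V'_def)
    have q3: "\<forall>\<sigma>\<in>V'. \<exists>p. Q \<sigma> p" using less.prems(3) by (simp add: V'_def)
    have q4: "\<forall>\<sigma>\<in>V'. \<forall>\<sigma>'\<in>V'. \<forall>p. prefix \<sigma> \<sigma>' \<longrightarrow> Q \<sigma> p \<longrightarrow> (\<exists>p'. prefix p p' \<and> Q \<sigma>' p')"
      using less.prems(4) unfolding V'_def by (meson DiffD1)
    obtain \<psi>' where p1: "\<forall>\<tau>\<in>V'. Q \<tau> (\<psi>' \<tau>)" and p2: "mono_map V' \<psi>' prefix"
      using less.hyps[OF cV fV' pc q3 q4] by blast
    show ?thesis
    proof (cases "\<sigma> = []")
      case True
      then have "V = {[]}" using s by auto
      then show ?thesis using less.prems(3) by (auto simp: mono_map_def)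
    next
      case False
      define \<beta> where "\<beta> = butlast \<sigma>"
      have sb: "\<sigma> = \<beta> @ [last \<sigma>]" using False by (simp add: \<beta>_def)
      have bV0: "\<beta> \<in> V" using less.prems(2) sb s(1) by (metis (no_types))
      have "\<beta> \<noteq> \<sigma>" using sb by (metis (no_types) append_self_conv list.distinct(1))
      then have bV: "\<beta> \<in> V'" using bV0 by (simp add: V'_def)
      have pbs: "prefix \<beta> \<sigma>" using sb by (simp add: \<beta>_def prefixeq_butlast)
      have "Q \<beta> (\<psi>' \<beta>)" using p1 bV by blast
      then obtain p' where pp: "prefix (\<psi>' \<beta>) p'" "Q \<sigma> p'"
        using less.prems(4)[rule_format, OF bV0 s(1) pbs] by blast
      define \<psi> where "\<psi> = \<psi>'(\<sigma> := p')"
      have "\<forall>\<tau>\<in>V. Q \<tau> (\<psi> \<tau>)" using p1 pp by (auto simp: \<psi>_def V'_def)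
      moreover have "mono_map V \<psi> prefix"
        unfolding mono_map_def
      proof (intro ballI impI)
        fix a b assume a: "a \<in> V" and b: "b \<in> V" and ab: "prefix a b"
        show "prefix (\<psi> a) (\<psi> b)"
        proof (cases "b = \<sigma>")
          case True
          show ?thesis
          proof (cases "a = \<sigma>")
            case True then show ?thesis using \<open>b = \<sigma>\<close> by simp
          next
            case False
            then have "prefix a \<beta>" using ab \<open>b = \<sigma>\<close> sb by (metis prefix_snoc)
            then have "prefix (\<psi>' a) (\<psi>' \<beta>)" using p2 a bV False by (auto simp: mono_map_def V'_def)
            then show ?thesis using pp(1) False \<open>b = \<sigma>\<close> by (auto simp: \<psi>_def intro: prefix_order.trans)
          qed
        next
          case False
          have "a \<noteq> \<sigma>"
          proof
            assume "a = \<sigma>"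
            then have "length b \<le> length a" using s(2) b by auto
            then have "a = b" using ab by (auto simp: prefix_def)
            then show False using False \<open>a = \<sigma>\<close> by simp
          qed
          have "a \<in> V'" "b \<in> V'" using a b False \<open>a \<noteq> \<sigma>\<close> by (auto simp: V'_def)
          then have "prefix (\<psi>' a) (\<psi>' b)" using p2 ab unfolding mono_map_def by blast
          then show ?thesis using False \<open>a \<noteq> \<sigma>\<close> by (simp add: \<psi>_def)
        qed
      qed
      ultimately show ?thesis by blast
    qed
  qed
qed

lemma determines_mono:
  "determines m S L P c A \<Longrightarrow> (\<forall>j<m. L j \<subseteq> L' j) \<Longrightarrow> determines m S L' P c A"
proof (induction m arbitrary: S L L' P c)
  case 0 then show ?case by simp
next
  case (Suc m)
  from Suc.prems(1) obtain U where f: "is_family S L P U" and g: "\<forall>\<tau>\<in>P. if m = 0 then (\<forall>x\<in>tildeU P U \<tau>. c \<tau> = Base (A x))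
             else determines m (tildeU P U \<tau>)
                    (\<lambda>j. (\<lambda>B. tildeU P U \<tau> \<inter> B) ` L (Suc j))
                    (trnodes (c \<tau>)) (trlabs (c \<tau>)) A" by auto
  have f': "is_family S L' P U" using f Suc.prems(2) by (auto simp: is_family_def)
  have "\<forall>\<tau>\<in>P. if m = 0 then (\<forall>x\<in>tildeU P U \<tau>. c \<tau> = Base (A x))
             else determines m (tildeU P U \<tau>)
                    (\<lambda>j. (\<lambda>B. tildeU P U \<tau> \<inter> B) ` L' (Suc j))
                    (trnodes (c \<tau>)) (trlabs (c \<tau>)) A"
  proof
    fix \<tau> assume t: "\<tau> \<in> P"
    show "if m = 0 then (\<forall>x\<in>tildeU P U \<tau>. c \<tau> = Base (A x))
             else determines m (tildeU P U \<tau>)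
                    (\<lambda>j. (\<lambda>B. tildeU P U \<tau> \<inter> B) ` L' (Suc j))
                    (trnodes (c \<tau>)) (trlabs (c \<tau>)) A"
    proof (cases "m = 0")
      case True then show ?thesis using g t by simp
    next
      case False
      have "determines m (tildeU P U \<tau>) (\<lambda>j. (\<lambda>B. tildeU P U \<tau> \<inter> B) ` L (Suc j))
                    (trnodes (c \<tau>)) (trlabs (c \<tau>)) A" using g t False by simp
      moreover have "\<forall>j<m. (\<lambda>B. tildeU P U \<tau> \<inter> B) ` L (Suc j) \<subseteq> (\<lambda>B. tildeU P U \<tau> \<inter> B) ` L' (Suc j)"
        using Suc.prems(2) by auto
      ultimately show ?thesis using Suc.IH False by simp
    qed
  qed
  with f' show ?case by auto
qed



lemma tildeU_D: "x \<in> tildeU P U p \<Longrightarrow> x \<in> U p \<and> (\<forall>i. p @ [i] \<in> P \<longrightarrow> x \<notin> U (p @ [i]))"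
  by (auto simp: tildeU_def)

lemma tildeU_I: "x \<in> U p \<Longrightarrow> (\<And>i. p @ [i] \<in> P \<Longrightarrow> x \<notin> U (p @ [i])) \<Longrightarrow> x \<in> tildeU P U p"
  by (auto simp: tildeU_def)

lemma hleT_Tr_iff: "hleT (Suc m) (Tr V t) (Tr W f) = hleTF m (Tr V t) W f"
  by (simp add: hleTF_def)

lemma fwd:
  "\<forall>S L P c C le T. determines (Suc m) S L P c A \<longrightarrow> finite P \<longrightarrow> (\<forall>p\<in>P. isT k m (c p)) \<longrightarrow>
     C \<subseteq> S \<longrightarrow> (\<forall>j\<le>m. \<forall>B\<in>L j. \<forall>x\<in>C\<inter>B. \<forall>y\<in>C. le j x y \<longrightarrow> y\<in>B) \<longrightarrow>
     isT k (Suc m) T \<longrightarrow> tleC (Suc m) T C le A \<longrightarrow> hleTF m T P c"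
proof (induction m rule: less_induct)
  case (less m)
  show ?case
  proof (intro allI impI)
    fix S L P c C le T
    assume det: "determines (Suc m) S L P c A" and finP: "finite P" and labP: "\<forall>p\<in>P. isT k m (c p)"
      and CS: "C \<subseteq> S" and Lup: "\<forall>j\<le>m. \<forall>B\<in>L j. \<forall>x\<in>C\<inter>B. \<forall>y\<in>C. le j x y \<longrightarrow> y\<in>B"
      and iT: "isT k (Suc m) T" and tl: "tleC (Suc m) T C le A"
    obtain U where fam: "is_family S L P U" and g: "\<forall>\<tau>\<in>P. if m = 0 then (\<forall>x\<in>tildeU P U \<tau>. c \<tau> = Base (A x))
             else determines m (tildeU P U \<tau>)
                    (\<lambda>j. (\<lambda>B. tildeU P U \<tau> \<inter> B) ` L (Suc j))
                    (trnodes (c \<tau>)) (trlabs (c \<tau>)) A" using det by auto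
    obtain V t where T: "T = Tr V t" using iT by (cases T) auto
    have tV: "is_tree V" and labT: "\<forall>\<tau>\<in>V. isT k m (t \<tau>)" using iT T by auto
    obtain \<phi> where im: "\<forall>\<tau>\<in>V. \<phi> \<tau> \<in> C" and mo: "mono_map V \<phi> (le 0)"
      and lab: "\<forall>\<tau>\<in>V. if m = 0 then t \<tau> = Base (A (\<phi> \<tau>))
                   else tleC m (t \<tau>) (eqcl C (le 0) (\<phi> \<tau>)) (\<lambda>i. le (Suc i)) A"
      using tl T by auto
    have UL: "\<forall>p\<in>P. U p \<in> L 0" using fam by (simp add: is_family_def)
    have Uun: "(\<Union>p\<in>P. U p) = S" using fam by (simp add: is_family_def)
    have up0: "y \<in> U p" if "p \<in> P" "x \<in> C" "x \<in> U p" "y \<in> C" "le 0 x y" for p x y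
    proof -
      have "U p \<in> L 0" using UL that(1) by blast
      then show ?thesis using Lup[rule_format, of 0 "U p" x y] that by simp
    qed
    define Q where "Q \<sigma> p \<longleftrightarrow> p \<in> P \<and> \<phi> \<sigma> \<in> tildeU P U p" for \<sigma> p
    have q3: "\<forall>\<sigma>\<in>V. \<exists>p. Q \<sigma> p"
    proof
      fix \<sigma> assume s: "\<sigma> \<in> V"
      then have "\<phi> \<sigma> \<in> S" using im CS by auto
      then obtain p where pp: "p \<in> P" "\<phi> \<sigma> \<in> U p" using Uun by auto
      obtain p' where "p' \<in> P" "\<phi> \<sigma> \<in> tildeU P U p'" using descend[where U=U, OF finP pp] by (elim bexE conjE)
      then show "\<exists>p. Q \<sigma> p" by (auto simp: Q_def)
    qed
    have q4: "\<forall>\<sigma>\<in>V. \<forall>\<sigma>'\<in>V. \<forall>p. prefix \<sigma> \<sigma>' \<longrightarrow> Q \<sigma> p \<longrightarrow> (\<exists>p'. prefix p p' \<and> Q \<sigma>' p')"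
    proof (intro ballI allI impI)
      fix \<sigma> \<sigma>' p assume s: "\<sigma> \<in> V" "\<sigma>' \<in> V" "prefix \<sigma> \<sigma>'" "Q \<sigma> p"
      have "le 0 (\<phi> \<sigma>) (\<phi> \<sigma>')" using mo s by (simp add: mono_map_def)
      moreover have "p \<in> P" "\<phi> \<sigma> \<in> U p" using s(4) tildeU_D[of "\<phi> \<sigma>" P U p] by (auto simp: Q_def)
      ultimately have "\<phi> \<sigma>' \<in> U p" using up0[of p "\<phi> \<sigma>" "\<phi> \<sigma>'"] im s(1,2) by simp
      then obtain p' where "p' \<in> P" "prefix p p'" "\<phi> \<sigma>' \<in> tildeU P U p'"
        using descend[where U=U, OF finP \<open>p \<in> P\<close> \<open>\<phi> \<sigma>' \<in> U p\<close>] by (elim bexE conjE)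
      then show "\<exists>p'. prefix p p' \<and> Q \<sigma>' p'" by (auto simp: Q_def)
    qed
    have finV: "finite V" and pcV: "\<forall>\<tau> \<sigma>. \<tau> @ \<sigma> \<in> V \<longrightarrow> \<tau> \<in> V" using tV by (auto simp: is_tree_def)
    obtain \<psi> where \<psi>Q: "\<forall>\<sigma>\<in>V. Q \<sigma> (\<psi> \<sigma>)" and \<psi>m: "mono_map V \<psi> prefix"
      using build_mono[OF finV pcV q3 q4] by blast
    have labs: "hleT m (t \<sigma>) (c (\<psi> \<sigma>))" if s: "\<sigma> \<in> V" for \<sigma>
    proof -
      define p where "p = \<psi> \<sigma>"
      define x where "x = \<phi> \<sigma>"
      have pP: "p \<in> P" and xt: "x \<in> tildeU P U p" using \<psi>Q s by (auto simp: Q_def p_def x_def)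
      have xC: "x \<in> C" using im s by (simp add: x_def)
      show ?thesis
      proof (cases "m = 0")
        case True
        then have "c p = Base (A x)" using g pP xt by auto
        moreover have "t \<sigma> = Base (A x)" using lab s True by (simp add: x_def)
        ultimately show ?thesis using True by (simp add: p_def)
      next
        case False
        then obtain m1 where m1: "m = Suc m1" by (cases m) auto
        define S' where "S' = tildeU P U p"
        define L' where "L' = (\<lambda>j. (\<lambda>B. S' \<inter> B) ` L (Suc j))"
        have d: "determines (Suc m1) S' L' (trnodes (c p)) (trlabs (c p)) A"
          using g pP False m1 by (simp add: S'_def L'_def)
        have tl': "tleC (Suc m1) (t \<sigma>) (eqcl C (le 0) x) (\<lambda>i. le (Suc i)) A"
          using lab s False m1 by (simp add: x_def)
        have it': "isT k (Suc m1) (t \<sigma>)" using labT s m1 by simp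
        have icp: "isT k (Suc m1) (c p)" using labP pP m1 by simp
        then obtain W f where cp: "c p = Tr W f" by (cases "c p") auto
        have tW: "is_tree W" and labW: "\<forall>w\<in>W. isT k m1 (f w)" using icp cp by auto
        have finW: "finite W" using tW by (simp add: is_tree_def)
        have CS': "eqcl C (le 0) x \<subseteq> S'"
        proof
          fix y assume y: "y \<in> eqcl C (le 0) x"
          then have yC: "y \<in> C" and xy: "le 0 x y" and yx: "le 0 y x" by (auto simp: eqcl_def)
          have xU: "x \<in> U p" and xn: "\<forall>i. p @ [i] \<in> P \<longrightarrow> x \<notin> U (p @ [i])" using tildeU_D[OF xt] by auto
          have "y \<in> U p" using up0[OF pP xC xU yC xy] .
          moreover have "y \<notin> U (p @ [i])" if "p @ [i] \<in> P" for i
          proof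
            assume "y \<in> U (p @ [i])"
            then have "x \<in> U (p @ [i])" using up0[OF that yC _ xC yx] by blast
            then show False using xn that by blast
          qed
          ultimately show "y \<in> S'" unfolding S'_def by (rule tildeU_I)
        qed
        have Lup': "\<forall>j\<le>m1. \<forall>B'\<in>L' j. \<forall>z\<in>eqcl C (le 0) x \<inter> B'. \<forall>y\<in>eqcl C (le 0) x. le (Suc j) z y \<longrightarrow> y \<in> B'"
        proof (intro allI impI ballI)
          fix j B' z y assume j: "j \<le> m1" and B': "B' \<in> L' j" and z: "z \<in> eqcl C (le 0) x \<inter> B'"
            and y: "y \<in> eqcl C (le 0) x" and zy: "le (Suc j) z y"
          obtain B where B: "B \<in> L (Suc j)" "B' = S' \<inter> B" using B' by (auto simp: L'_def)
          have "z \<in> C \<inter> B" "y \<in> C" using z y B by (auto simp: eqcl_def)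
          moreover have "Suc j \<le> m" using j m1 by simp
          ultimately have "y \<in> B" using Lup[rule_format, of "Suc j" B z y] B(1) zy by simp
          then show "y \<in> B'" using B(2) CS' y by auto
        qed
        have "m1 < m" using m1 by simp
        have "hleTF m1 (t \<sigma>) W f"
          by (rule less.IH[OF \<open>m1 < m\<close>, rule_format, OF d[unfolded cp trnodes.simps trlabs.simps] finW labW[rule_format] CS' Lup'[rule_format] it' tl'])
        moreover obtain V' t' where "t \<sigma> = Tr V' t'" using it' by (cases "t \<sigma>") auto
        ultimately show ?thesis using m1 cp hleT_Tr_iff by (simp add: p_def)
      qed
    qed
    have "\<forall>\<sigma>\<in>V. \<psi> \<sigma> \<in> P" using \<psi>Q by (simp add: Q_def)
    then show "hleTF m T P c" using T \<psi>m labs by (auto simp: hleTF_def intro!: exI[of _ \<psi>])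
  qed
qed



lemma np_refl: "npreorder n S le \<Longrightarrow> i < n \<Longrightarrow> x \<in> S \<Longrightarrow> le i x x"
  unfolding npreorder_def by blast
lemma np_trans: "npreorder n S le \<Longrightarrow> i < n \<Longrightarrow> x \<in> S \<Longrightarrow> y \<in> S \<Longrightarrow> z \<in> S \<Longrightarrow> le i x y \<Longrightarrow> le i y z \<Longrightarrow> le i x z"
  unfolding npreorder_def by blast
lemma np_down: "npreorder n S le \<Longrightarrow> Suc i < n \<Longrightarrow> x \<in> S \<Longrightarrow> y \<in> S \<Longrightarrow> le (Suc i) x y \<Longrightarrow> le i x y \<and> le i y x"
  unfolding npreorder_def by blast
lemma np_shift: assumes "npreorder (Suc n) S le" "S' \<subseteq> S" shows "npreorder n S' (\<lambda>i. le (Suc i))"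
proof -
  have "\<forall>i<n. (\<forall>x\<in>S'. le (Suc i) x x) \<and> (\<forall>x\<in>S'. \<forall>y\<in>S'. \<forall>z\<in>S'. le (Suc i) x y \<longrightarrow> le (Suc i) y z \<longrightarrow> le (Suc i) x z)"
  proof (intro allI impI conjI ballI)
    fix i x assume "i < n" "x \<in> S'" then show "le (Suc i) x x" using np_refl[OF assms(1), of "Suc i" x] assms(2) by auto
  next
    fix i x y z assume "i < n" "x \<in> S'" "y \<in> S'" "z \<in> S'" "le (Suc i) x y" "le (Suc i) y z"
    then show "le (Suc i) x z" using np_trans[OF assms(1), of "Suc i" x y z] assms(2) by auto
  qed
  moreover have "\<forall>i. Suc i < n \<longrightarrow> (\<forall>x\<in>S'. \<forall>y\<in>S'. le (Suc (Suc i)) x y \<longrightarrow> le (Suc i) x y \<and> le (Suc i) y x)"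
  proof (intro allI impI ballI)
    fix i x y assume "Suc i < n" "x \<in> S'" "y \<in> S'" "le (Suc (Suc i)) x y"
    then show "le (Suc i) x y \<and> le (Suc i) y x" using np_down[OF assms(1), of "Suc i" x y] assms(2) by auto
  qed
  ultimately show ?thesis unfolding npreorder_def by blast
qed

lemma is_tree_single[simp]: "is_tree {[]}"
  by (simp add: is_tree_def)

lemma tree_root: "is_tree V \<Longrightarrow> [] \<in> V"
  unfolding is_tree_def by (metis append_Nil ex_in_conv)

definition emb :: "nat \<Rightarrow> nat \<Rightarrow> 'a set \<Rightarrow> (nat \<Rightarrow> 'a \<Rightarrow> 'a \<Rightarrow> bool) \<Rightarrow> ('a \<Rightarrow> nat)
    \<Rightarrow> nat list set \<Rightarrow> (nat list \<Rightarrow> lt) \<Rightarrow> 'a \<Rightarrow> bool" where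
  "emb k m S le A Q c x \<longleftrightarrow> (\<forall>T. isT k (Suc m) T \<and> tleC (Suc m) T (up S le x) le A \<longrightarrow> hleTF m T Q c)"

definition GG :: "nat \<Rightarrow> nat \<Rightarrow> 'a set \<Rightarrow> (nat \<Rightarrow> 'a \<Rightarrow> 'a \<Rightarrow> bool) \<Rightarrow> ('a \<Rightarrow> nat) \<Rightarrow> 'a \<Rightarrow> lt set" where
  "GG k m S le A x = {T. isT k (Suc m) T \<and> tleC (Suc m) T (up S le x) le A}"

definition rootok :: "nat \<Rightarrow> 'a set \<Rightarrow> (nat \<Rightarrow> 'a \<Rightarrow> 'a \<Rightarrow> bool) \<Rightarrow> ('a \<Rightarrow> nat) \<Rightarrow> lt \<Rightarrow> 'a \<Rightarrow> bool" where
  "rootok m S le A r x \<longleftrightarrow> (if m = 0 then r = Base (A x) else tleC m r (eqcl S (le 0) x) (\<lambda>i. le (Suc i)) A)"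

lemma eqcl_up: "eqcl (up S le x) (le 0) x = eqcl S (le 0) x"
  by (auto simp: eqcl_def up_def)

lemma GG_join:
  assumes np: "npreorder (Suc m) S le" and x: "x \<in> S" and T1: "T1 \<in> GG k m S le A x" and T2: "T2 \<in> GG k m S le A x"
    and r: "isT k m r" "rootok m S le A r x"
  shows "jn r T1 T2 \<in> GG k m S le A x"
proof -
  have xx: "le 0 x x" using np_refl[OF np _ x] by simp
  have "x \<in> up S le x" using x xx by (simp add: up_def)
  moreover have "\<forall>y\<in>up S le x. le 0 x y" by (simp add: up_def)
  moreover have "if m = 0 then r = Base (A x) else tleC m r (eqcl (up S le x) (le 0) x) (\<lambda>i. le (Suc i)) A"
    using r(2) by (simp add: rootok_def eqcl_up)
  ultimately have "tleC (Suc m) (jn r T1 T2) (up S le x) le A"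
    using tleC_jn[of x "up S le x" le m T1 A T2 r] T1 T2 by (simp add: GG_def)
  moreover have "isT k (Suc m) (jn r T1 T2)" using isT_jn T1 T2 r(1) by (simp add: GG_def)
  ultimately show ?thesis by (simp add: GG_def)
qed

lemma sing_root:
  assumes np: "npreorder (Suc m) S le" and x: "x \<in> S" and Ax: "A x < k"
  shows "isT k m (sing m (A x)) \<and> rootok m S le A (sing m (A x)) x"
proof (cases m)
  case 0 then show ?thesis using Ax by (simp add: rootok_def)
next
  case (Suc j)
  have "x \<in> eqcl S (le 0) x" using x np_refl[OF np _ x, of 0] by (simp add: eqcl_def)
  moreover have "\<And>i. i \<le> j \<Longrightarrow> le (Suc i) x x" using np_refl[OF np _ x] Suc by simp
  ultimately have "tleC (Suc j) (sing (Suc j) (A x)) (eqcl S (le 0) x) (\<lambda>i. le (Suc i)) A"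
    by (rule tleC_sing)
  moreover have "isT k m (sing m (A x))" by (rule isT_sing[OF Ax])
  ultimately show ?thesis using Suc unfolding rootok_def by simp
qed

lemma GG_ne:
  assumes np: "npreorder (Suc m) S le" and x: "x \<in> S" and Ax: "A x < k"
  shows "sing (Suc m) (A x) \<in> GG k m S le A x"
proof -
  have "x \<in> up S le x" using x np_refl[OF np _ x, of 0] by (simp add: up_def)
  moreover have "\<And>i. i \<le> m \<Longrightarrow> le i x x" using np_refl[OF np _ x] by simp
  ultimately have "tleC (Suc m) (sing (Suc m) (A x)) (up S le x) le A" by (rule tleC_sing)
  moreover have "isT k (Suc m) (sing (Suc m) (A x))" by (rule isT_sing[OF Ax])
  ultimately show ?thesis unfolding GG_def by (intro CollectI conjI)
qed

lemma GG_Tr: "T \<in> GG k m S le A x \<Longrightarrow> \<exists>V t. T = Tr V t \<and> [] \<in> V"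
  by (cases T) (auto simp: GG_def tree_root)

lemma GG_closure:
  assumes np: "npreorder (Suc m) S le" and x: "x \<in> S" and Ax: "A x < k"
    and T1: "T1 \<in> GG k m S le A x" and T2: "T2 \<in> GG k m S le A x"
  shows "\<exists>T3\<in>GG k m S le A x. \<forall>Q. hleTF m T3 Q c \<longrightarrow> hleTF m T1 Q c \<and> hleTF m T2 Q c"
proof -
  have sr: "isT k m (sing m (A x))" "rootok m S le A (sing m (A x)) x" using sing_root[where A=A, OF np x Ax] by auto
  have J: "jn (sing m (A x)) T1 T2 \<in> GG k m S le A x" by (rule GG_join[OF np x T1 T2 sr])
  obtain V1 t1 where V1: "T1 = Tr V1 t1" using GG_Tr[OF T1] by blast
  obtain V2 t2 where V2: "T2 = Tr V2 t2" using GG_Tr[OF T2] by blast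
  have "\<forall>Q. hleTF m (jn (sing m (A x)) T1 T2) Q c \<longrightarrow> hleTF m T1 Q c \<and> hleTF m T2 Q c"
  proof (intro allI impI)
    fix Q assume "hleTF m (jn (sing m (A x)) T1 T2) Q c"
    then obtain q where "q \<in> Q" "hleTF m T1 (sub Q q) c" "hleTF m T2 (sub Q q) c"
      using hleTF_jn[of m "sing m (A x)" V1 t1 V2 t2 Q c] V1 V2 by auto
    moreover have "sub Q q \<subseteq> Q" by (auto simp: sub_def)
    ultimately show "hleTF m T1 Q c \<and> hleTF m T2 Q c" using hleTF_mono by blast
  qed
  then show ?thesis using J by (intro bexI)
qed



lemma up_mono: "npreorder (Suc m) S le \<Longrightarrow> x \<in> S \<Longrightarrow> y \<in> S \<Longrightarrow> le 0 x y \<Longrightarrow> up S le y \<subseteq> up S le x"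
  unfolding up_def using np_trans[of "Suc m" S le 0 x y] by auto

lemma sub_sub: "prefix p q \<Longrightarrow> sub P q \<subseteq> sub P p"
  unfolding sub_def using prefix_order.trans by blast

lemma emb_mono: "emb k m S le A Q c x \<Longrightarrow> Q \<subseteq> Q' \<Longrightarrow> emb k m S le A Q' c x"
  unfolding emb_def using hleTF_mono by blast

lemma emb_GG: "emb k m S le A Q c x \<longleftrightarrow> (\<forall>T\<in>GG k m S le A x. hleTF m T Q c)"
  unfolding emb_def GG_def by blast

lemma cover:
  assumes np: "npreorder (Suc m) S le" and x: "x \<in> S" and Ax: "A x < k" and finP: "finite P"
    and H: "\<forall>T. isT k (Suc m) T \<and> tleC (Suc m) T S le A \<longrightarrow> hleTF m T P c"
  shows "\<exists>p\<in>P. emb k m S le A (sub P p) c x"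
proof -
  have a: "\<forall>T\<in>GG k m S le A x. \<exists>p\<in>P. hleTF m T (sub P p) c"
  proof
    fix T assume T: "T \<in> GG k m S le A x"
    then have "tleC (Suc m) T S le A" using tleC_mono_set[of "Suc m" T "up S le x" le A S]
      by (auto simp: GG_def up_def)
    moreover have "isT k (Suc m) T" using T by (simp add: GG_def)
    ultimately have "hleTF m T P c" using H by blast
    moreover obtain V t where "T = Tr V t" "[] \<in> V" using GG_Tr[OF T] by blast
    ultimately show "\<exists>p\<in>P. hleTF m T (sub P p) c" using hleTF_root by blast
  qed
  have b: "\<forall>T1\<in>GG k m S le A x. \<forall>T2\<in>GG k m S le A x. \<exists>T3\<in>GG k m S le A x.
      \<forall>p. hleTF m T3 (sub P p) c \<longrightarrow> hleTF m T1 (sub P p) c \<and> hleTF m T2 (sub P p) c"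
  proof (intro ballI)
    fix T1 T2 assume "T1 \<in> GG k m S le A x" "T2 \<in> GG k m S le A x"
    from GG_closure[where A=A, OF np x Ax this, of c] obtain T3 where "T3 \<in> GG k m S le A x"
      "\<forall>Q. hleTF m T3 Q c \<longrightarrow> hleTF m T1 Q c \<and> hleTF m T2 Q c" by (elim bexE)
    then show "\<exists>T3\<in>GG k m S le A x.
      \<forall>p. hleTF m T3 (sub P p) c \<longrightarrow> hleTF m T1 (sub P p) c \<and> hleTF m T2 (sub P p) c" by blast
  qed
  have ne: "GG k m S le A x \<noteq> {}" using GG_ne[where A=A, OF np x Ax] by blast
  obtain p where "p \<in> P" "\<forall>T\<in>GG k m S le A x. hleTF m T (sub P p) c"
    using directed[OF finP ne a b] by (elim bexE)
  then show ?thesis unfolding emb_GG by blast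
qed

lemma key:
  assumes np: "npreorder (Suc m) S le" and x: "x \<in> S" and Ax: "A x < k" and finP: "finite P"
    and pc: "\<forall>a b. a @ b \<in> P \<longrightarrow> a \<noteq> [] \<longrightarrow> a \<in> P"
    and xp: "emb k m S le A (sub P p) c x"
    and xn: "\<forall>i. p @ [i] \<in> P \<longrightarrow> \<not> emb k m S le A (sub P (p @ [i])) c x"
    and r: "isT k m r" "rootok m S le A r x"
  shows "hleT m r (c p)"
proof (rule ccontr)
  assume nh: "\<not> hleT m r (c p)"
  define I where "I = {i. p @ [i] \<in> P}"
  have finI: "finite I"
  proof -
    have "I = (\<lambda>i. p @ [i]) -` P" by (auto simp: I_def)
    moreover have "inj (\<lambda>i::nat. p @ [i])" by (auto simp: inj_def)
    ultimately show ?thesis using finite_vimageI[OF finP] by simp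
  qed
  have a: "\<forall>T\<in>GG k m S le A x. \<exists>i\<in>I. hleTF m T (sub P (p @ [i])) c"
  proof
    fix T assume T: "T \<in> GG k m S le A x"
    obtain V t where VT: "T = Tr V t" using GG_Tr[OF T] by blast
    have J: "jn r T T \<in> GG k m S le A x" by (rule GG_join[OF np x T T r])
    then have "hleTF m (jn r T T) (sub P p) c" using xp unfolding emb_GG by blast
    then obtain q where q: "q \<in> sub P p" "hleT m r (c q)" "hleTF m T (sub (sub P p) q) c"
      using hleTF_jn[of m r V t V t "sub P p" c] VT by blast
    have "q \<noteq> p" using q(2) nh by blast
    moreover have pq: "prefix p q" "q \<in> P" using q(1) by (auto simp: sub_def)
    ultimately obtain i rest where qe: "q = p @ i # rest"
      by (metis prefix_def append_Nil2 neq_Nil_conv)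
    have iI: "p @ [i] \<in> P" using pc pq(2) qe by (metis append.assoc append_Cons append_Nil snoc_eq_iff_butlast)
    have "prefix (p @ [i]) q" using qe by simp
    then have "sub (sub P p) q \<subseteq> sub P (p @ [i])" by (auto simp: sub_def intro: prefix_order.trans)
    then have "hleTF m T (sub P (p @ [i])) c" using q(3) hleTF_mono by blast
    then show "\<exists>i\<in>I. hleTF m T (sub P (p @ [i])) c" using iI by (auto simp: I_def)
  qed
  have b: "\<forall>T1\<in>GG k m S le A x. \<forall>T2\<in>GG k m S le A x. \<exists>T3\<in>GG k m S le A x.
      \<forall>i. hleTF m T3 (sub P (p @ [i])) c \<longrightarrow> hleTF m T1 (sub P (p @ [i])) c \<and> hleTF m T2 (sub P (p @ [i])) c"
  proof (intro ballI)
    fix T1 T2 assume "T1 \<in> GG k m S le A x" "T2 \<in> GG k m S le A x"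
    from GG_closure[where A=A, OF np x Ax this, of c] obtain T3 where "T3 \<in> GG k m S le A x"
      "\<forall>Q. hleTF m T3 Q c \<longrightarrow> hleTF m T1 Q c \<and> hleTF m T2 Q c" by (elim bexE)
    then show "\<exists>T3\<in>GG k m S le A x.
      \<forall>i. hleTF m T3 (sub P (p @ [i])) c \<longrightarrow> hleTF m T1 (sub P (p @ [i])) c \<and> hleTF m T2 (sub P (p @ [i])) c" by blast
  qed
  have ne: "GG k m S le A x \<noteq> {}" using GG_ne[where A=A, OF np x Ax] by blast
  obtain i where "i \<in> I" "\<forall>T\<in>GG k m S le A x. hleTF m T (sub P (p @ [i])) c"
    using directed[OF finI ne a b] by (elim bexE)
  then show False using xn unfolding emb_GG I_def by blast
qed



lemma Cbase_shift:
  assumes np: "npreorder (Suc m) S le" and S'S: "S' \<subseteq> S" and j: "Suc j < Suc m"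
  shows "Cbase S' (\<lambda>i. le (Suc i)) j \<subseteq> (\<lambda>B. S' \<inter> B) ` Cbase S le (Suc j)"
proof
  fix W assume W: "W \<in> Cbase S' (\<lambda>i. le (Suc i)) j"
  then have WS: "W \<subseteq> S'" and Wup: "\<forall>x\<in>W. \<forall>y\<in>S'. le (Suc j) x y \<longrightarrow> y \<in> W" by (auto simp: Cbase_def)
  define B where "B = {y\<in>S. \<exists>w\<in>W. le (Suc j) w y}"
  have "B \<in> Cbase S le (Suc j)"
    unfolding Cbase_def
  proof (intro CollectI conjI ballI impI)
    show "B \<subseteq> S" by (auto simp: B_def)
  next
    fix x y assume x: "x \<in> B" and y: "y \<in> S" and xy: "le (Suc j) x y"
    from x obtain w where w: "w \<in> W" "le (Suc j) w x" "x \<in> S" by (auto simp: B_def)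
    have "w \<in> S" using w(1) WS S'S by blast
    then have "le (Suc j) w y" using np_trans[OF np j \<open>w \<in> S\<close> w(3) y w(2) xy] by simp
    then show "y \<in> B" using y w(1) by (auto simp: B_def)
  qed
  moreover have "S' \<inter> B = W"
  proof
    show "S' \<inter> B \<subseteq> W" using Wup by (auto simp: B_def)
  next
    show "W \<subseteq> S' \<inter> B"
    proof
      fix w assume w: "w \<in> W"
      then have "w \<in> S" using WS S'S by blast
      then have "le (Suc j) w w" using np_refl[OF np j] by simp
      then show "w \<in> S' \<inter> B" using w WS \<open>w \<in> S\<close> by (auto simp: B_def)
    qed
  qed
  ultimately show "W \<in> (\<lambda>B. S' \<inter> B) ` Cbase S le (Suc j)" by blast
qed

lemma bwd:
  "\<forall>S le P c. npreorder (Suc m) S le \<longrightarrow> (\<forall>x\<in>S. A x < k) \<longrightarrow> finite P \<longrightarrow>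
     (\<forall>a b. a @ b \<in> P \<longrightarrow> a \<noteq> [] \<longrightarrow> a \<in> P) \<longrightarrow> (\<forall>p\<in>P. isT k m (c p)) \<longrightarrow>
     (\<forall>T. isT k (Suc m) T \<and> tleC (Suc m) T S le A \<longrightarrow> hleTF m T P c) \<longrightarrow>
     determines (Suc m) S (Cbase S le) P c A"
proof (induction m rule: less_induct)
  case (less m)
  show ?case
  proof (intro allI impI)
    fix S le P c
    assume np: "npreorder (Suc m) S le" and Ak: "\<forall>x\<in>S. A x < k" and finP: "finite P"
      and pc: "\<forall>a b. a @ b \<in> P \<longrightarrow> a \<noteq> [] \<longrightarrow> a \<in> P" and labP: "\<forall>p\<in>P. isT k m (c p)"
      and H: "\<forall>T. isT k (Suc m) T \<and> tleC (Suc m) T S le A \<longrightarrow> hleTF m T P c"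
    define U where "U p = {x\<in>S. emb k m S le A (sub P p) c x}" for p
    have Uup: "y \<in> U p" if "x \<in> U p" "y \<in> S" "le 0 x y" for p x y
    proof -
      have x: "x \<in> S" "emb k m S le A (sub P p) c x" using that(1) by (auto simp: U_def)
      have "up S le y \<subseteq> up S le x" using up_mono[OF np x(1) that(2,3)] .
      then have "emb k m S le A (sub P p) c y"
        using x(2) tleC_mono_set unfolding emb_def by blast
      then show ?thesis using that(2) by (simp add: U_def)
    qed
    have fam: "is_family S (Cbase S le) P U"
      unfolding is_family_def
    proof (intro conjI allI impI ballI)
      fix p assume "p \<in> P"
      show "U p \<in> Cbase S le 0" unfolding Cbase_def using Uup by (auto simp: U_def)
    next
      fix p i assume "p \<in> P" "p @ [i] \<in> P"
      have "sub P (p @ [i]) \<subseteq> sub P p" by (rule sub_sub) simp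
      then show "U (p @ [i]) \<subseteq> U p" using emb_mono by (auto simp: U_def)
    next
      show "(\<Union>p\<in>P. U p) = S"
      proof
        show "(\<Union>p\<in>P. U p) \<subseteq> S" by (auto simp: U_def)
      next
        show "S \<subseteq> (\<Union>p\<in>P. U p)"
        proof
          fix x assume x: "x \<in> S"
          obtain p where "p \<in> P" "emb k m S le A (sub P p) c x"
            using cover[OF np x _ finP H] Ak x by blast
          then show "x \<in> (\<Union>p\<in>P. U p)" using x by (auto simp: U_def)
        qed
      qed
    qed
    have keyU: "hleT m r (c p)" if p: "p \<in> P" and x: "x \<in> tildeU P U p" and r: "isT k m r" "rootok m S le A r x" for p x r
    proof -
      have xU: "x \<in> U p" and xn: "\<forall>i. p @ [i] \<in> P \<longrightarrow> x \<notin> U (p @ [i])" using tildeU_D[OF x] by auto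
      have xS: "x \<in> S" using xU by (simp add: U_def)
      show ?thesis
      proof (rule key[OF np xS _ finP pc _ _ r])
        show "A x < k" using Ak xS by blast
        show "emb k m S le A (sub P p) c x" using xU by (simp add: U_def)
        show "\<forall>i. p @ [i] \<in> P \<longrightarrow> \<not> emb k m S le A (sub P (p @ [i])) c x" using xn xS by (simp add: U_def)
      qed
    qed
    have per: "\<forall>\<tau>\<in>P. if m = 0 then (\<forall>x\<in>tildeU P U \<tau>. c \<tau> = Base (A x))
             else determines m (tildeU P U \<tau>)
                    (\<lambda>j. (\<lambda>B. tildeU P U \<tau> \<inter> B) ` Cbase S le (Suc j))
                    (trnodes (c \<tau>)) (trlabs (c \<tau>)) A"
    proof
      fix p assume p: "p \<in> P"
      show "if m = 0 then (\<forall>x\<in>tildeU P U p. c p = Base (A x))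
             else determines m (tildeU P U p)
                    (\<lambda>j. (\<lambda>B. tildeU P U p \<inter> B) ` Cbase S le (Suc j))
                    (trnodes (c p)) (trlabs (c p)) A"
      proof (cases "m = 0")
        case True
        have "c p = Base (A x)" if x: "x \<in> tildeU P U p" for x
        proof -
          have xS: "x \<in> S" using tildeU_D[OF x] by (simp add: U_def)
          have "isT k m (Base (A x))" using True Ak xS by simp
          moreover have "rootok m S le A (Base (A x)) x" using True by (simp add: rootok_def)
          ultimately have "hleT m (Base (A x)) (c p)" using keyU[OF p x] by blast
          then show ?thesis using True by (cases "c p") auto
        qed
        then show ?thesis using True by simp
      next
        case False
        then obtain m1 where m1: "m = Suc m1" by (cases m) auto
        define S' where "S' = tildeU P U p"
        define le' where "le' = (\<lambda>i. le (Suc i))"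
        have S'S: "S' \<subseteq> S" by (auto simp: S'_def tildeU_def U_def)
        have icp: "isT k (Suc m1) (c p)" using labP p m1 by simp
        then obtain W f where cp: "c p = Tr W f" by (cases "c p") auto
        have tW: "is_tree W" and labW: "\<forall>w\<in>W. isT k m1 (f w)" using icp cp by auto
        have finW: "finite W" and pcW: "\<forall>a b. a @ b \<in> W \<longrightarrow> a \<noteq> [] \<longrightarrow> a \<in> W"
          using tW by (auto simp: is_tree_def)
        have np': "npreorder (Suc m1) S' le'" unfolding le'_def using np_shift[OF _ S'S] np m1 by simp
        have Ak': "\<forall>x\<in>S'. A x < k" using Ak S'S by blast
        have H': "\<forall>T. isT k (Suc m1) T \<and> tleC (Suc m1) T S' le' A \<longrightarrow> hleTF m1 T W f"
        proof (intro allI impI)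
          fix T assume "isT k (Suc m1) T \<and> tleC (Suc m1) T S' le' A"
          then have iT: "isT k (Suc m1) T" and tT: "tleC (Suc m1) T S' le' A" by auto
          obtain V t where T: "T = Tr V t" using iT by (cases T) auto
          have rV: "[] \<in> V" using iT T tree_root by auto
          obtain \<phi> where im: "\<forall>\<tau>\<in>V. \<phi> \<tau> \<in> S'" and mo: "mono_map V \<phi> (le' 0)"
            and lab: "\<forall>\<tau>\<in>V. if m1 = 0 then t \<tau> = Base (A (\<phi> \<tau>))
                   else tleC m1 (t \<tau>) (eqcl S' (le' 0) (\<phi> \<tau>)) (\<lambda>i. le' (Suc i)) A"
            using tT T by auto
          define x where "x = \<phi> []"
          have xS': "x \<in> S'" using im rV by (simp add: x_def)
          have xS: "x \<in> S" using xS' S'S by blast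
          define E where "E = eqcl S (le 0) x"
          have xt: "x \<in> tildeU P U p" using xS' by (simp add: S'_def)
          have xU: "x \<in> U p" and xn: "\<forall>i. p @ [i] \<in> P \<longrightarrow> x \<notin> U (p @ [i])" using tildeU_D[OF xt] by auto
          have ES': "E \<subseteq> S'"
          proof
            fix y assume "y \<in> E"
            then have y: "y \<in> S" "le 0 x y" "le 0 y x" by (auto simp: E_def eqcl_def)
            have "y \<in> U p" using Uup[OF xU y(1,2)] .
            moreover have "y \<notin> U (p @ [i])" if "p @ [i] \<in> P" for i
            proof
              assume "y \<in> U (p @ [i])"
              then have "x \<in> U (p @ [i])" using Uup[OF _ xS y(3)] by blast
              then show False using xn that by blast
            qed
            ultimately show "y \<in> S'" unfolding S'_def by (rule tildeU_I)
          qed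
          have imE: "\<forall>\<tau>\<in>V. \<phi> \<tau> \<in> E"
          proof
            fix \<tau> assume \<tau>: "\<tau> \<in> V"
            have "le (Suc 0) x (\<phi> \<tau>)" using mo rV \<tau> by (simp add: mono_map_def le'_def x_def)
            moreover have "\<phi> \<tau> \<in> S" using im \<tau> S'S by blast
            ultimately have "le 0 x (\<phi> \<tau>) \<and> le 0 (\<phi> \<tau>) x" using np_down[OF np _ xS, of 0 "\<phi> \<tau>"] m1 by simp
            then show "\<phi> \<tau> \<in> E" using \<open>\<phi> \<tau> \<in> S\<close> by (simp add: E_def eqcl_def)
          qed
          have eqE: "eqcl S' (le' 0) y = eqcl E (le' 0) y" if y: "y \<in> E" for y
          proof
            show "eqcl E (le' 0) y \<subseteq> eqcl S' (le' 0) y" using ES' by (auto simp: eqcl_def)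
          next
            show "eqcl S' (le' 0) y \<subseteq> eqcl E (le' 0) y"
            proof
              fix z assume z: "z \<in> eqcl S' (le' 0) y"
              then have zS: "z \<in> S" and yz: "le 1 y z" and zy: "le 1 z y" using S'S by (auto simp: eqcl_def le'_def)
              have yS: "y \<in> S" and xy: "le 0 x y" and yx: "le 0 y x" using y by (auto simp: E_def eqcl_def)
              have "le 0 y z \<and> le 0 z y" using np_down[OF np _ yS zS, of 0] yz m1 by simp
              then have "le 0 x z" "le 0 z x"
                using np_trans[OF np _ xS yS zS, of 0] np_trans[OF np _ zS yS xS, of 0] xy yx by auto
              then have "z \<in> E" using zS by (simp add: E_def eqcl_def)
              then show "z \<in> eqcl E (le' 0) y" using z by (simp add: eqcl_def)
            qed
          qed
          have "tleC (Suc m1) T E le' A"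
          proof -
            have "\<forall>\<tau>\<in>V. if m1 = 0 then t \<tau> = Base (A (\<phi> \<tau>))
                   else tleC m1 (t \<tau>) (eqcl E (le' 0) (\<phi> \<tau>)) (\<lambda>i. le' (Suc i)) A"
            proof
              fix \<tau> assume \<tau>: "\<tau> \<in> V"
              have eq: "eqcl S' (le' 0) (\<phi> \<tau>) = eqcl E (le' 0) (\<phi> \<tau>)" using eqE imE \<tau> by blast
              show "if m1 = 0 then t \<tau> = Base (A (\<phi> \<tau>))
                   else tleC m1 (t \<tau>) (eqcl E (le' 0) (\<phi> \<tau>)) (\<lambda>i. le' (Suc i)) A"
                by (subst eq[symmetric]) (rule bspec[OF lab \<tau>])
            qed
            then show ?thesis using T imE mo by (auto intro!: exI[of _ \<phi>])
          qed
          then have "rootok (Suc m1) S le A T x" by (simp add: rootok_def E_def le'_def)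
          then have "hleT (Suc m1) T (c p)" using keyU[OF p xt] iT m1 by simp
          then show "hleTF m1 T W f" using T cp hleT_Tr_iff by simp
        qed
        have "m1 < m" using m1 by simp
        have d: "determines (Suc m1) S' (Cbase S' le') W f A"
          by (rule less.IH[OF \<open>m1 < m\<close>, rule_format, OF np' Ak'[rule_format] finW pcW[rule_format] labW[rule_format] H'[rule_format]])
        have "\<forall>j<Suc m1. Cbase S' le' j \<subseteq> (\<lambda>B. S' \<inter> B) ` Cbase S le (Suc j)"
          using Cbase_shift[OF np S'S] m1 unfolding le'_def by simp
        then have d2: "determines (Suc m1) S' (\<lambda>j. (\<lambda>B. S' \<inter> B) ` Cbase S le (Suc j)) W f A"
          by (rule determines_mono[OF d])
        have "determines (Suc m1) (tildeU P U p) (\<lambda>j. (\<lambda>B. tildeU P U p \<inter> B) ` Cbase S le (Suc j))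
           (trnodes (c p)) (trlabs (c p)) A"
          using d2[unfolded S'_def] unfolding cp trnodes.simps trlabs.simps .
        then show ?thesis unfolding m1 by (simp only: nat.distinct if_False)
      qed
    qed
    show "determines (Suc m) S (Cbase S le) P c A"
      unfolding determines.simps by (rule exI[of _ U], rule conjI[OF fam per])
  qed
qed



theorem theorem3p8:
  fixes n k :: nat and C :: "'a set" and le :: "nat \<Rightarrow> 'a \<Rightarrow> 'a \<Rightarrow> bool"
    and A :: "'a \<Rightarrow> nat" and F :: "nat list set" and c :: "nat list \<Rightarrow> lt"
  assumes "0 < n" and "2 \<le> k" and "npreorder n C le"
    and "\<forall>x\<in>C. A x < k" and "isF k n F c"
  shows "A \<in> fine_class n k C le F c \<longleftrightarrow>
         (\<forall>T. isT k n T \<and> tleC n T C le A \<longrightarrow> hleTF (n - 1) T F c)"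
proof -
  obtain m where n: "n = Suc m" using assms(1) by (cases n) auto
  have finF: "finite F" and pcF: "\<forall>a b. a @ b \<in> F \<longrightarrow> a \<noteq> [] \<longrightarrow> a \<in> F"
    and labF: "\<forall>p\<in>F. isT k m (c p)"
    using assms(5) n by (auto simp: isF_def is_forest_def)
  have np: "npreorder (Suc m) C le" using assms(3) n by simp
  have Cup: "\<forall>j\<le>m. \<forall>B\<in>Cbase C le j. \<forall>x\<in>C\<inter>B. \<forall>y\<in>C. le j x y \<longrightarrow> y\<in>B"
    by (auto simp: Cbase_def)
  show ?thesis
  proof
    assume "A \<in> fine_class n k C le F c"
    then have d: "determines (Suc m) C (Cbase C le) F c A" using n by (simp add: fine_class_def)
    show "\<forall>T. isT k n T \<and> tleC n T C le A \<longrightarrow> hleTF (n - 1) T F c"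
    proof (intro allI impI)
      fix T assume "isT k n T \<and> tleC n T C le A"
      then have iT: "isT k (Suc m) T" and tT: "tleC (Suc m) T C le A" using n by auto
      have "hleTF m T F c"
        by (rule fwd[rule_format, OF d finF labF[rule_format] subset_refl Cup[rule_format] iT tT])
      then show "hleTF (n - 1) T F c" using n by simp
    qed
  next
    assume H: "\<forall>T. isT k n T \<and> tleC n T C le A \<longrightarrow> hleTF (n - 1) T F c"
    have H': "\<And>T. isT k (Suc m) T \<and> tleC (Suc m) T C le A \<Longrightarrow> hleTF m T F c"
      using H n by simp
    have "determines (Suc m) C (Cbase C le) F c A"
      by (rule bwd[rule_format, OF np assms(4)[rule_format] finF pcF[rule_format] labF[rule_format] H'])
    then show "A \<in> fine_class n k C le F c" using assms(4) n by (simp add: fine_class_def)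
  qed
qed

end
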